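(* Let $w\in\{0,1\}^*$ be a $\frac{7}{3}$-power-free word with $|w|\geq 52$. Then $w$ contains both $\mu^3(0)=01101001$ and $\mu^3(1)=10010110$ as subwords.
   Context: $\mu$ is the Thue–Morse morphism on $\{0,1\}^*$, defined by $\mu(0)=01$, $\mu(1)=10$. A word $w'$ is a subword of $w$ if $w=uw'v$ for some words $u,v$. For a rational $\alpha\ge 1$, an $\alpha$-power is a word of the form $x^nx'$ with $x$ a nonempty word, $x'$ a prefix of $x$, $n$ a nonnegative integer and $n+|x'|/|x|=\alpha$. A word is $\alpha$-power-free if none of its subwords is a $\beta$-power for any rational $\beta\geq\alpha$. *)

theory Defs
  imports Complex_Main "HOL-Library.Sublist"
begin

text \<open>Binary words are lists over nat with letters in {0,1}.\<close>

fun tm :: "nat \<Rightarrow> nat list" where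
  "tm a = (if a = 0 then [0,1] else [1,0])"

definition mu :: "nat list \<Rightarrow> nat list" where
  "mu w = concat (map tm w)"

definition subword :: "'a list \<Rightarrow> 'a list \<Rightarrow> bool" where
  "subword v w \<longleftrightarrow> (\<exists>u u'. w = u @ v @ u')"

definition is_power :: "'a list \<Rightarrow> rat \<Rightarrow> bool" where
  "is_power u alpha \<longleftrightarrow> (\<exists>x x' n. x \<noteq> [] \<and> prefix x' x \<and>
      u = concat (replicate n x) @ x' \<and>
      alpha = of_nat n + of_nat (length x') / of_nat (length x))"

definition power_free :: "rat \<Rightarrow> 'a list \<Rightarrow> bool" where
  "power_free alpha w \<longleftrightarrow> (\<forall>v beta. subword v w \<and> beta \<ge> alpha \<longrightarrow> \<not> is_power v beta)"

end

theory Submission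
  imports Defs
begin

fun occ :: "nat list \<Rightarrow> nat list \<Rightarrow> bool" where
  "occ v [] = (v = [])"
| "occ v (a # w) = (take (length v) (a # w) = v \<or> occ v w)"

lemma occ_sound: "occ v w \<Longrightarrow> subword v w"
proof (induction w)
  case Nil then show ?case by (auto simp: subword_def)
next
  case (Cons a w)
  show ?case
  proof (cases "take (length v) (a # w) = v")
    case True
    then have "a # w = [] @ v @ drop (length v) (a # w)"
      by (metis append_Nil append_take_drop_id)
    then show ?thesis unfolding subword_def by blast
  next
    case False
    then have "subword v w" using Cons by auto
    then obtain u u' where "w = u @ v @ u'" unfolding subword_def by blast
    then have "a # w = (a # u) @ v @ u'" by simp
    then show ?thesis unfolding subword_def by blast
  qed
qed

lemma subword_trans: "subword a b \<Longrightarrow> subword b c \<Longrightarrow> subword a c"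
  unfolding subword_def by (metis append.assoc)

lemma prefix_subword: "prefix u w \<Longrightarrow> subword u w"
  unfolding subword_def prefix_def by (metis append_Nil)

definition pchk :: "nat list \<Rightarrow> nat \<Rightarrow> bool" where
  "pchk w p = (let L = (7*p+2) div 3 in L \<le> length w \<and>
     (let s = drop (length w - L) w; x = take p s in
        s = concat (replicate (L div p) x) @ take (L mod p) x))"

definition bad :: "nat list \<Rightarrow> bool" where
  "bad w = list_ex (pchk w) [1..<Suc (length w)]"

lemma rat_ineq:
  assumes "p > 0" "3 * (n * p + r) \<ge> 7 * (p::nat)"
  shows "(7/3::rat) \<le> of_nat n + of_nat r / of_nat p"
proof -
  have pp: "(of_nat p::rat) > 0" using assms by simp
  have h: "(7::rat) * of_nat p \<le> 3 * of_nat (n * p + r)"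
    using assms(2) by (metis of_nat_le_iff of_nat_mult of_nat_numeral)
  have "of_nat n + of_nat r / of_nat p = (of_nat (n*p+r) :: rat) / of_nat p"
    using pp by (simp add: field_simps)
  then show ?thesis using pp h by (simp add: le_divide_eq)
qed

lemma bad_power:
  assumes "bad w"
  shows "\<exists>s beta. subword s w \<and> beta \<ge> 7/3 \<and> is_power s beta"
proof -
  obtain p where p: "p \<ge> 1" "pchk w p" using assms unfolding bad_def list_ex_iff by auto
  define L where "L = (7*p+2) div 3"
  define s where "s = drop (length w - L) w"
  define x where "x = take p s"
  have L: "L \<le> length w" and seq: "s = concat (replicate (L div p) x) @ take (L mod p) x"
    using p(2) unfolding pchk_def Let_def L_def s_def x_def by auto
  have ls: "length s = L" using L s_def by simp
  have "L \<ge> p" unfolding L_def by simp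
  then have xne: "x \<noteq> []" using ls p(1) unfolding x_def by auto
  have lx: "length x = p" using ls \<open>L \<ge> p\<close> unfolding x_def by simp
  have sub: "subword s w" unfolding subword_def s_def
    by (metis append_Nil2 append_take_drop_id)
  have lr: "length (take (L mod p) x) = L mod p" using lx p(1) by simp
  have h3: "3 * (L div p * p + L mod p) \<ge> 7 * p" unfolding L_def by simp
  have b: "(7/3::rat) \<le> of_nat (L div p) + of_nat (L mod p) / of_nat p"
    by (rule rat_ineq[OF _ h3]) (use p(1) in auto)
  have "is_power s (of_nat (L div p) + of_nat (L mod p) / of_nat p)"
    unfolding is_power_def
    apply (rule exI[of _ x], rule exI[of _ "take (L mod p) x"], rule exI[of _ "L div p"])
    using xne seq lr lx by (simp add: take_is_prefix)
  then show ?thesis using sub b by blast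
qed

definition A :: "nat list" where "A = [0,1,1,0,1,0,0,1]"
definition B :: "nat list" where "B = [1,0,0,1,0,1,1,0]"

fun chk :: "nat \<Rightarrow> nat list \<Rightarrow> bool" where
  "chk 0 w = (occ A w \<and> occ B w)"
| "chk (Suc n) w = (occ A w \<and> occ B w \<or>
     ((bad (w @ [0]) \<or> chk n (w @ [0])) \<and> (bad (w @ [1]) \<or> chk n (w @ [1]))))"

lemma chk_sound:
  assumes "chk n u" "prefix u w" "length w \<ge> length u + n" "set w \<subseteq> {0,1}"
    "power_free (7/3) w"
  shows "subword A w \<and> subword B w"
  using assms
proof (induction n arbitrary: u)
  case 0
  then have "occ A u" "occ B u" by auto
  then show ?case using occ_sound prefix_subword[OF 0(2)] subword_trans by blast
next
  case (Suc n)
  show ?case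
  proof (cases "occ A u \<and> occ B u")
    case True
    then show ?thesis using Suc.prems(2) occ_sound prefix_subword[OF Suc.prems(2)]
      subword_trans by blast
  next
    case False
    obtain t where wt: "w = u @ t" using Suc.prems(2) unfolding prefix_def by blast
    then obtain a t' where t: "t = a # t'" using Suc.prems(3)
      by (cases t) auto
    have a: "a = 0 \<or> a = 1" using Suc.prems(4) wt t by auto
    have pre: "prefix (u @ [a]) w" using wt t by simp
    have nb: "\<not> bad (u @ [a])"
    proof
      assume "bad (u @ [a])"
      then obtain s beta where "subword s (u @ [a])" "beta \<ge> 7/3" "is_power s beta"
        using bad_power by blast
      moreover have "subword s w" using calculation(1) pre prefix_subword subword_trans by blast
      ultimately show False using Suc.prems(5) unfolding power_free_def by blast
    qed
    have "chk n (u @ [a])" using Suc.prems(1) False a nb by auto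
    then show ?thesis using Suc.IH[of "u @ [a]"] pre Suc.prems by auto
  qed
qed

lemma chk23: "chk 23 []"
  by code_simp

lemma mu3: "(mu ^^ 3) [0] = A" "(mu ^^ 3) [1] = B"
  by (simp_all add: mu_def A_def B_def numeral_eq_Suc)

theorem lemma3:
  fixes w :: "nat list"
  assumes "set w \<subseteq> {0, 1}"
    and "power_free (7/3) w"
    and "length w \<ge> 52"
  shows "subword ((mu ^^ 3) [0]) w \<and> subword ((mu ^^ 3) [1]) w"
  unfolding mu3
  by (rule chk_sound[OF chk23]) (use assms in auto)

end
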